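(* Let $X=\{1,\dots,n\}$, $Y$ finite, $Q$ a symmetric irreducible stochastic matrix on $Y$ (notation in context). Let $1\le k\le n-1$, let $\underline a=(a_0,\dots,a_m)$ be a type with $a_0+\cdots+a_m=k+1$ and $a_0\ge1$, $\underline a'=(a_0-1,a_1,\dots,a_m)$, $A\subseteq X$ with $|A|=k$, and $F\in P_{k,\underline a',A}$. Then $$D_{k+1,\underline a}D^*_{k+1,\underline a}F=|Y|(n-k)\,F+Q_kF.$$
   Context: $Q$ acts on $L(Y)$ by $(Qf)(y)=\sum_{y'}q(y,y')f(y')$, with distinct eigenvalues $\lambda_0=1,\dots,\lambda_m$ and eigenspaces $W_0$ (constants), $W_1,\dots,W_m$; $\sum_yf(y)=0$ for $f\in W_j$, $j\ge1$. $\Theta_k$: functions $\theta$ with $\mathrm{dom}(\theta)$ a $k$-subset of $X$ and values in $Y$; $\varphi\subseteq\theta$ means $\mathrm{dom}\varphi\subseteq\mathrm{dom}\theta$ and $\theta|_{\mathrm{dom}\varphi}=\varphi$. $D_k:L(\Theta_k)\to L(\Theta_{k-1})$, $(D_kF)(\varphi)=\sum_{\theta\supseteq\varphi}F(\theta)$; $D_k^*:L(\Theta_{k-1})\to L(\Theta_k)$, $(D_k^*F)(\theta)=\sum_{\varphi\subseteq\theta}F(\varphi)$. Types $\underline a=(a_0,\dots,a_m)$, $\ell(\underline a)=a_1+\cdots+a_m$. A fundamental function of type $\underline b$ on a $k$-set $A$ is $F=\bigotimes_{j\in A}F^j$ ($F(\theta)=\prod_{j\in A}F^j(\theta(j))$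 on $Y^A$, $0$ elsewhere) with each $F^j$ in some $W_{i_j}$ and exactly $b_i$ indices $j$ with $i_j=i$; $P_{k,\underline b,A}$ is their span and $P_{k,\underline b}=\bigoplus_AP_{k,\underline b,A}$. $D_{k+1,\underline a}$ is $D_{k+1}$ restricted to $P_{k+1,\underline a}$ and $D^*_{k+1,\underline a}$ is $D^*_{k+1}$ restricted to $P_{k,\underline a'}$. The operator $Q_k$ on $L(\Theta_k)$ is defined on a fundamental function $F=\bigotimes_{j\in A}F^j$ and extended linearly: for $\theta\in\Theta_k$ with $|\mathrm{dom}\theta\cap A|=k-1$, $A\setminus\mathrm{dom}\theta=\{i\}$, $\mathrm{dom}\theta\setminus A=\{i_0\}$, $(Q_kF)(\theta)=|Y|F(\bar\theta)$ if $F^i\in W_0$ and $0$ if $F^i\notin W_0$, where $\bar\theta\in Y^A$ agrees with $\theta$ on $A\setminus\{i\}$ and $\bar\theta(i)=\theta(i_0)$; for all other $\theta$, $(Q_kF)(\theta)=0$. *)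

theory Defs
  imports Complex_Main
begin

definition Qop :: "('y::finite \<Rightarrow> 'y \<Rightarrow> real) \<Rightarrow> ('y \<Rightarrow> real) \<Rightarrow> 'y \<Rightarrow> real" where
  "Qop Q f y = (\<Sum>y'\<in>UNIV. Q y y' * f y')"

definition stochastic :: "('y::finite \<Rightarrow> 'y \<Rightarrow> real) \<Rightarrow> bool" where
  "stochastic Q \<longleftrightarrow> (\<forall>x y. 0 \<le> Q x y) \<and> (\<forall>x. (\<Sum>y\<in>UNIV. Q x y) = 1)"

definition irreducible_mat :: "('y::finite \<Rightarrow> 'y \<Rightarrow> real) \<Rightarrow> bool" where
  "irreducible_mat Q \<longleftrightarrow> (\<forall>x y. (x, y) \<in> {(u, v). 0 < Q u v}\<^sup>*)"

definition is_eigenvalue :: "('y::finite \<Rightarrow> 'y \<Rightarrow> real) \<Rightarrow> real \<Rightarrow> bool" where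
  "is_eigenvalue Q \<mu> \<longleftrightarrow> (\<exists>f. f \<noteq> (\<lambda>_. 0) \<and> Qop Q f = (\<lambda>y. \<mu> * f y))"

definition eigen_enum :: "('y::finite \<Rightarrow> 'y \<Rightarrow> real) \<Rightarrow> (nat \<Rightarrow> real) \<Rightarrow> nat \<Rightarrow> bool" where
  "eigen_enum Q lam m \<longleftrightarrow> lam 0 = 1 \<and> inj_on lam {..m} \<and> lam ` {..m} = {\<mu>. is_eigenvalue Q \<mu>}"

definition eigsp :: "('y::finite \<Rightarrow> 'y \<Rightarrow> real) \<Rightarrow> (nat \<Rightarrow> real) \<Rightarrow> nat \<Rightarrow> ('y \<Rightarrow> real) set" where
  "eigsp Q lam i = {f. Qop Q f = (\<lambda>y. lam i * f y)}"

definition Theta :: "nat \<Rightarrow> nat \<Rightarrow> (nat \<rightharpoonup> 'y) set" where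
  "Theta n k = {\<theta>. dom \<theta> \<subseteq> {1..n} \<and> card (dom \<theta>) = k}"

definition D :: "nat \<Rightarrow> nat \<Rightarrow> ((nat \<rightharpoonup> 'y) \<Rightarrow> real) \<Rightarrow> (nat \<rightharpoonup> 'y) \<Rightarrow> real" where
  "D n k F \<phi> = (\<Sum>\<theta>\<in>{\<theta>\<in>Theta n k. \<phi> \<subseteq>\<^sub>m \<theta>}. F \<theta>)"

definition Dstar :: "nat \<Rightarrow> nat \<Rightarrow> ((nat \<rightharpoonup> 'y) \<Rightarrow> real) \<Rightarrow> (nat \<rightharpoonup> 'y) \<Rightarrow> real" where
  "Dstar n k F \<theta> = (\<Sum>\<phi>\<in>{\<phi>\<in>Theta n (k - 1). \<phi> \<subseteq>\<^sub>m \<theta>}. F \<phi>)"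

definition tensor :: "nat set \<Rightarrow> (nat \<Rightarrow> 'y \<Rightarrow> real) \<Rightarrow> (nat \<rightharpoonup> 'y) \<Rightarrow> real" where
  "tensor A G \<theta> = (if dom \<theta> = A then (\<Prod>j\<in>A. G j (the (\<theta> j))) else 0)"

definition fundamental :: "('y::finite \<Rightarrow> 'y \<Rightarrow> real) \<Rightarrow> (nat \<Rightarrow> real) \<Rightarrow> nat \<Rightarrow> nat set
    \<Rightarrow> (nat \<Rightarrow> nat) \<Rightarrow> (nat \<Rightarrow> 'y \<Rightarrow> real) \<Rightarrow> bool" where
  "fundamental Q lam m A b G \<longleftrightarrow>
     (\<exists>idx :: nat \<Rightarrow> nat. (\<forall>j\<in>A. idx j \<le> m \<and> G j \<in> eigsp Q lam (idx j))
        \<and> (\<forall>i\<le>m. card {j\<in>A. idx j = i} = b i))"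

definition Qk :: "('y::finite \<Rightarrow> 'y \<Rightarrow> real) \<Rightarrow> (nat \<Rightarrow> real) \<Rightarrow> nat \<Rightarrow> nat set
    \<Rightarrow> (nat \<Rightarrow> 'y \<Rightarrow> real) \<Rightarrow> (nat \<rightharpoonup> 'y) \<Rightarrow> real" where
  "Qk Q lam k A G \<theta> =
     (if card (dom \<theta> \<inter> A) = k - 1 then
        (let i = the_elem (A - dom \<theta>); i0 = the_elem (dom \<theta> - A);
             \<theta>bar = (\<theta> |` (A - {i}))(i \<mapsto> the (\<theta> i0))
         in if G i \<in> eigsp Q lam 0 then real (card (UNIV :: 'y set)) * tensor A G \<theta>bar else 0)
      else 0)"

end

theory Submission imports Defs begin

lemma finite_Theta: "finite (Theta n k :: (nat \<rightharpoonup> 'y::finite) set)"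
proof -
  have "Theta n k \<subseteq> (\<Union>D\<in>Pow {1..n}. {m :: nat \<rightharpoonup> 'y. dom m = D \<and> ran m \<subseteq> UNIV})"
    unfolding Theta_def by auto
  moreover have "finite (\<Union>D\<in>Pow {1..n}. {m :: nat \<rightharpoonup> 'y. dom m = D \<and> ran m \<subseteq> UNIV})"
    by (intro finite_UN_I finite_Pow_iff[THEN iffD2] finite_set_of_finite_maps) (auto dest: finite_subset)
  ultimately show ?thesis by (rule finite_subset)
qed

lemma eig1_const:
  fixes Q :: "'y::finite \<Rightarrow> 'y \<Rightarrow> real"
  assumes st: "stochastic Q" and irr: "irreducible_mat Q"
    and fx: "\<And>y. (\<Sum>y'\<in>UNIV. Q y y' * f y') = f y"
  shows "f x = f z"
proof -
  define M where "M = Max (range f)"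
  obtain x0 where x0: "f x0 = M" unfolding M_def
    by (metis (mono_tags) Max_in UNIV_not_empty finite_UNIV finite_imageI image_iff image_is_empty)
  have ub: "f y \<le> M" for y unfolding M_def by simp
  have step: "f v = M" if "f u = M" "0 < Q u v" for u v
  proof -
    have "(\<Sum>y'\<in>UNIV. Q u y' * (M - f y')) = M * (\<Sum>y'\<in>UNIV. Q u y') - (\<Sum>y'\<in>UNIV. Q u y' * f y')"
      by (simp add: algebra_simps sum_subtractf sum_distrib_left)
    also have "\<dots> = 0" using st fx[of u] that(1) unfolding stochastic_def by simp
    finally have s0: "(\<Sum>y'\<in>UNIV. Q u y' * (M - f y')) = 0" .
    have nn: "\<And>y'. y' \<in> UNIV \<Longrightarrow> 0 \<le> Q u y' * (M - f y')" using st ub unfolding stochastic_def by simp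
    have "\<forall>x\<in>UNIV. Q u x * (M - f x) = 0" using sum_nonneg_eq_0_iff[of UNIV "\<lambda>y'. Q u y' * (M - f y')", OF finite_UNIV nn] s0 by simp
    then have "Q u v * (M - f v) = 0" by simp
    with that(2) show ?thesis by simp
  qed
  have all: "f y = M" for y
  proof -
    have "(x0, y) \<in> {(u, v). 0 < Q u v}\<^sup>*" using irr unfolding irreducible_mat_def by simp
    then show ?thesis
      by (induction rule: rtrancl_induct) (use x0 step in auto)
  qed
  show ?thesis using all by simp
qed

lemma eig_sum_zero:
  fixes Q :: "'y::finite \<Rightarrow> 'y \<Rightarrow> real"
  assumes sym: "\<forall>x y. Q x y = Q y x" and st: "stochastic Q"
    and e: "Qop Q f = (\<lambda>y. \<mu> * f y)" and mu: "\<mu> \<noteq> 1"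
  shows "(\<Sum>y\<in>UNIV. f y) = 0"
proof -
  have "\<mu> * (\<Sum>y\<in>UNIV. f y) = (\<Sum>y\<in>UNIV. Qop Q f y)" by (simp add: e sum_distrib_left)
  also have "\<dots> = (\<Sum>y\<in>UNIV. \<Sum>y'\<in>UNIV. Q y y' * f y')" by (simp add: Qop_def)
  also have "\<dots> = (\<Sum>y'\<in>UNIV. f y' * (\<Sum>y\<in>UNIV. Q y' y))"
    by (subst sum.swap) (simp add: sum_distrib_left sym mult.commute)
  also have "\<dots> = (\<Sum>y\<in>UNIV. f y)" using st by (simp add: stochastic_def)
  finally have "(\<mu> - 1) * (\<Sum>y\<in>UNIV. f y) = 0" by (simp add: algebra_simps)
  with mu show ?thesis by simp
qed

lemma fund_sum:
  fixes Q :: "'y::finite \<Rightarrow> 'y \<Rightarrow> real"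
  assumes sym: "\<forall>x y. Q x y = Q y x" and st: "stochastic Q" and irr: "irreducible_mat Q"
    and eig: "eigen_enum Q lam m" and f: "fundamental Q lam m A b G" and iA: "i \<in> A"
  shows "(\<Sum>y\<in>UNIV. G i y) = (if G i \<in> eigsp Q lam 0 then real (card (UNIV::'y set)) * G i z else 0)"
proof (cases "G i \<in> eigsp Q lam 0")
  case True
  then have "Qop Q (G i) = (\<lambda>y. G i y)" using eig by (simp add: eigsp_def eigen_enum_def)
  then have "\<And>y. (\<Sum>y'\<in>UNIV. Q y y' * G i y') = G i y" by (metis Qop_def)
  then have "G i y = G i z" for y by (rule eig1_const[OF st irr])
  then have "(\<Sum>y\<in>UNIV. G i y) = (\<Sum>y\<in>(UNIV::'y set). G i z)" by (intro sum.cong) auto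
  then show ?thesis using True by simp
next
  case False
  obtain idx where idx: "idx i \<le> m" "G i \<in> eigsp Q lam (idx i)"
    using f iA unfolding fundamental_def by blast
  with False have "idx i \<noteq> 0" by (metis)
  then have ne: "lam (idx i) \<noteq> 1" using eig idx(1) unfolding eigen_enum_def
    by (metis atMost_iff inj_on_contraD zero_le)
  have "Qop Q (G i) = (\<lambda>y. lam (idx i) * G i y)" using idx(2) by (simp add: eigsp_def)
  then show ?thesis using False eig_sum_zero[OF sym st _ ne] by simp
qed

lemma Theta_finite_dom: "\<theta> \<in> Theta n k \<Longrightarrow> finite (dom \<theta>)"
  unfolding Theta_def by (auto intro: finite_subset)

lemma inner:
  fixes F :: "(nat \<rightharpoonup> 'y::finite) \<Rightarrow> real"
  assumes AX: "A \<subseteq> {1..n}" and cA: "card A = k" and supp: "\<forall>\<phi>. dom \<phi> \<noteq> A \<longrightarrow> F \<phi> = 0"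
  shows "Dstar n (k+1) F \<eta> = (if A \<subseteq> dom \<eta> then F (\<eta> |` A) else 0)"
proof -
  let ?S = "{\<phi>\<in>Theta n k. \<phi> \<subseteq>\<^sub>m \<eta>}"
  have fS: "finite ?S" using finite_Theta[of n k] by (rule rev_finite_subset) auto
  have "Dstar n (k+1) F \<eta> = (\<Sum>\<phi>\<in>?S. F \<phi>)" by (simp add: Dstar_def)
  also have "\<dots> = (\<Sum>\<phi>\<in>?S. if \<phi> = \<eta>|`A then F \<phi> else 0)"
  proof (rule sum.cong[OF refl])
    fix \<phi> assume "\<phi> \<in> ?S"
    then have le: "\<phi> \<subseteq>\<^sub>m \<eta>" by simp
    show "F \<phi> = (if \<phi> = \<eta>|`A then F \<phi> else 0)"
    proof (cases "dom \<phi> = A")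
      case True
      have "\<phi> = \<eta>|`A"
      proof
        fix x show "\<phi> x = (\<eta>|`A) x"
          using le True unfolding map_le_def restrict_map_def by (cases "x \<in> A") auto
      qed
      then show ?thesis by simp
    next
      case False
      then have "F \<phi> = 0" using supp by simp
      then show ?thesis by auto
    qed
  qed
  also have "\<dots> = (if \<eta>|`A \<in> ?S then F (\<eta>|`A) else 0)" using fS by (simp add: sum.delta)
  also have "\<dots> = (if A \<subseteq> dom \<eta> then F (\<eta>|`A) else 0)"
  proof (cases "A \<subseteq> dom \<eta>")
    case True
    then have "dom (\<eta>|`A) = A" by auto
    moreover have "\<eta>|`A \<subseteq>\<^sub>m \<eta>" unfolding map_le_def restrict_map_def by auto
    ultimately have "\<eta>|`A \<in> ?S" using AX cA by (simp add: Theta_def)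
    then show ?thesis using True by simp
  next
    case False
    then have "dom (\<eta>|`A) \<noteq> A" by auto
    then show ?thesis using False supp by simp
  qed
  finally show ?thesis .
qed

lemma outer:
  fixes F :: "(nat \<rightharpoonup> 'y::finite) \<Rightarrow> real"
  assumes AX: "A \<subseteq> {1..n}" and cA: "card A = k" and supp: "\<forall>\<phi>. dom \<phi> \<noteq> A \<longrightarrow> F \<phi> = 0"
  shows "D n (k + 1) (Dstar n (k + 1) F) \<theta>
     = (\<Sum>\<eta>\<in>{\<eta>\<in>Theta n (k+1). \<theta> \<subseteq>\<^sub>m \<eta> \<and> A \<subseteq> dom \<eta>}. F (\<eta>|`A))"
proof -
  let ?S = "{\<eta>\<in>Theta n (k+1). \<theta> \<subseteq>\<^sub>m \<eta>}"
  have fS: "finite ?S" using finite_Theta[of n "k+1"] by (rule rev_finite_subset) auto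
  have "D n (k + 1) (Dstar n (k + 1) F) \<theta> = (\<Sum>\<eta>\<in>?S. if A \<subseteq> dom \<eta> then F (\<eta> |` A) else 0)"
    unfolding D_def by (rule sum.cong[OF refl]) (rule inner[OF AX cA supp])
  also have "\<dots> = (\<Sum>\<eta>\<in>{\<eta>\<in>?S. A \<subseteq> dom \<eta>}. F (\<eta>|`A))"
    using sum.inter_filter[OF fS, symmetric] by simp
  also have "{\<eta>\<in>?S. A \<subseteq> dom \<eta>} = {\<eta>\<in>Theta n (k+1). \<theta> \<subseteq>\<^sub>m \<eta> \<and> A \<subseteq> dom \<eta>}" by auto
  finally show ?thesis .
qed

lemma upd_in:
  assumes th: "\<theta> \<in> Theta n k" and j: "j \<in> {1..n}" "j \<notin> dom \<theta>"
  shows "\<theta>(j\<mapsto>y) \<in> Theta n (k+1)" "\<theta> \<subseteq>\<^sub>m \<theta>(j\<mapsto>y)"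
proof -
  have f: "finite (dom \<theta>)" using Theta_finite_dom[OF th] .
  show "\<theta>(j\<mapsto>y) \<in> Theta n (k+1)" using th j f by (simp add: Theta_def)
  show "\<theta> \<subseteq>\<^sub>m \<theta>(j\<mapsto>y)" using j unfolding map_le_def by auto
qed

lemma upd_form:
  assumes "\<theta> \<subseteq>\<^sub>m \<eta>" "dom \<eta> = insert j (dom \<theta>)" "j \<notin> dom \<theta>"
  shows "\<eta> = \<theta>(j \<mapsto> the (\<eta> j))"
proof
  fix x show "\<eta> x = (\<theta>(j \<mapsto> the (\<eta> j))) x"
  proof (cases "x = j")
    case True
    have "\<eta> j \<noteq> None" using assms(2) by blast
    then show ?thesis using True by auto
  next
    case False
    show ?thesis
    proof (cases "x \<in> dom \<theta>")
      case True then show ?thesis using assms(1) False unfolding map_le_def by auto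
    next
      case F2: False
      then have "x \<notin> dom \<eta>" using assms(2) False by auto
      then have "\<eta> x = None" by blast
      moreover have "\<theta> x = None" using F2 by blast
      ultimately show ?thesis using False by simp
    qed
  qed
qed

lemma E_case1:
  assumes th: "\<theta> \<in> Theta n k" and dA: "dom \<theta> = A"
  shows "{\<eta>\<in>Theta n (k+1). \<theta> \<subseteq>\<^sub>m \<eta> \<and> A \<subseteq> dom \<eta>} = (\<lambda>(j,y). \<theta>(j\<mapsto>y)) ` (({1..n}-A) \<times> UNIV)"
    "inj_on (\<lambda>(j,y). \<theta>(j\<mapsto>y)) (({1..n}-A) \<times> UNIV)"
proof -
  have fA: "finite A" using Theta_finite_dom[OF th] dA by simp
  have cA: "card A = k" using th dA by (simp add: Theta_def)
  show "{\<eta>\<in>Theta n (k+1). \<theta> \<subseteq>\<^sub>m \<eta> \<and> A \<subseteq> dom \<eta>} = (\<lambda>(j,y). \<theta>(j\<mapsto>y)) ` (({1..n}-A) \<times> UNIV)"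
  proof
    show "{\<eta>\<in>Theta n (k+1). \<theta> \<subseteq>\<^sub>m \<eta> \<and> A \<subseteq> dom \<eta>} \<subseteq> (\<lambda>(j,y). \<theta>(j\<mapsto>y)) ` (({1..n}-A) \<times> UNIV)"
    proof
      fix \<eta> assume "\<eta> \<in> {\<eta>\<in>Theta n (k+1). \<theta> \<subseteq>\<^sub>m \<eta> \<and> A \<subseteq> dom \<eta>}"
      then have e: "\<eta> \<in> Theta n (k+1)" "\<theta> \<subseteq>\<^sub>m \<eta>" "A \<subseteq> dom \<eta>" by auto
      have "card (dom \<eta> - A) = 1" using e cA fA by (simp add: card_Diff_subset Theta_def)
      then obtain j where j: "dom \<eta> - A = {j}" by (auto simp: card_1_singleton_iff)
      have dj: "dom \<eta> = insert j (dom \<theta>)" using j e(3) dA by auto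
      have jd: "j \<in> dom \<eta>" "j \<notin> A" using j by auto
      have jn: "j \<in> {1..n}" "j \<notin> A" using jd e(1) unfolding Theta_def by blast+
      have "\<eta> = \<theta>(j \<mapsto> the (\<eta> j))" by (rule upd_form[OF e(2) dj]) (use jn dA in auto)
      then show "\<eta> \<in> (\<lambda>(j,y). \<theta>(j\<mapsto>y)) ` (({1..n}-A) \<times> UNIV)"
        using jn by (intro image_eqI[of _ _ "(j, the (\<eta> j))"]) auto
    qed
  next
    show "(\<lambda>(j,y). \<theta>(j\<mapsto>y)) ` (({1..n}-A) \<times> UNIV) \<subseteq> {\<eta>\<in>Theta n (k+1). \<theta> \<subseteq>\<^sub>m \<eta> \<and> A \<subseteq> dom \<eta>}"
    proof clarify
      fix j y assume jj: "j \<in> {1..n}" "j \<notin> A"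
      then have jd: "j \<notin> dom \<theta>" using dA by simp
      have "A \<subseteq> dom (\<theta>(j\<mapsto>y))" using dA by auto
      then show "\<theta>(j\<mapsto>y) \<in> Theta n (k+1) \<and> \<theta> \<subseteq>\<^sub>m \<theta>(j\<mapsto>y) \<and> A \<subseteq> dom (\<theta>(j\<mapsto>y))"
        using upd_in[OF th jj(1) jd] by blast
    qed
  qed
  show "inj_on (\<lambda>(j,y). \<theta>(j\<mapsto>y)) (({1..n}-A) \<times> UNIV)"
  proof (rule inj_onI, clarify)
    fix j y j' y' assume h: "\<theta>(j\<mapsto>y) = \<theta>(j'\<mapsto>y')" "j \<in> {1..n}" "j \<notin> A" "j' \<in> {1..n}" "j' \<notin> A"
    have ev: "(\<theta>(j\<mapsto>y)) j = (\<theta>(j'\<mapsto>y')) j" using h(1) by simp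
    have "j = j'"
    proof (rule ccontr)
      assume "j \<noteq> j'"
      then have "(\<theta>(j'\<mapsto>y')) j = None" using h(3) dA by auto
      then show False using ev by simp
    qed
    moreover then have "y = y'" using h(1) by (metis fun_upd_same option.inject)
    ultimately show "j = j' \<and> y = y'" by simp
  qed
qed

lemma E_case2:
  assumes th: "\<theta> \<in> Theta n k" and AX: "A \<subseteq> {1..n}" and iA: "A - dom \<theta> = {i}"
  shows "{\<eta>\<in>Theta n (k+1). \<theta> \<subseteq>\<^sub>m \<eta> \<and> A \<subseteq> dom \<eta>} = (\<lambda>y. \<theta>(i\<mapsto>y)) ` UNIV"
    "inj (\<lambda>y. \<theta>(i\<mapsto>y))"
proof -
  have fd: "finite (dom \<theta>)" using Theta_finite_dom[OF th] .
  have cd: "card (dom \<theta>) = k" using th by (simp add: Theta_def)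
  have i: "i \<in> {1..n}" "i \<notin> dom \<theta>" using iA AX by auto
  show "{\<eta>\<in>Theta n (k+1). \<theta> \<subseteq>\<^sub>m \<eta> \<and> A \<subseteq> dom \<eta>} = (\<lambda>y. \<theta>(i\<mapsto>y)) ` UNIV"
  proof
    show "{\<eta>\<in>Theta n (k+1). \<theta> \<subseteq>\<^sub>m \<eta> \<and> A \<subseteq> dom \<eta>} \<subseteq> (\<lambda>y. \<theta>(i\<mapsto>y)) ` UNIV"
    proof
      fix \<eta> assume "\<eta> \<in> {\<eta>\<in>Theta n (k+1). \<theta> \<subseteq>\<^sub>m \<eta> \<and> A \<subseteq> dom \<eta>}"
      then have e: "\<eta> \<in> Theta n (k+1)" "\<theta> \<subseteq>\<^sub>m \<eta>" "A \<subseteq> dom \<eta>" by auto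
      have d1: "dom \<theta> \<subseteq> dom \<eta>" by (rule map_le_implies_dom_le[OF e(2)])
      have "i \<in> A" using iA by blast
      then have "i \<in> dom \<eta>" using e(3) by blast
      then have sub: "insert i (dom \<theta>) \<subseteq> dom \<eta>" using d1 by blast
      have "card (insert i (dom \<theta>)) = card (dom \<eta>)" using e(1) fd cd i by (simp add: Theta_def)
      then have dj: "dom \<eta> = insert i (dom \<theta>)"
        using sub Theta_finite_dom[OF e(1)] by (metis card_subset_eq)
      have "\<eta> = \<theta>(i \<mapsto> the (\<eta> i))" by (rule upd_form[OF e(2) dj i(2)])
      then show "\<eta> \<in> (\<lambda>y. \<theta>(i\<mapsto>y)) ` UNIV" by blast
    qed
  next
    have "A \<subseteq> insert i (dom \<theta>)" using iA by auto
    then show "(\<lambda>y. \<theta>(i\<mapsto>y)) ` UNIV \<subseteq> {\<eta>\<in>Theta n (k+1). \<theta> \<subseteq>\<^sub>m \<eta> \<and> A \<subseteq> dom \<eta>}"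
      using upd_in[OF th i] by auto
  qed
  show "inj (\<lambda>y. \<theta>(i\<mapsto>y))" by (rule injI) (metis fun_upd_same option.inject)
qed

lemma E_case3:
  assumes th: "\<theta> \<in> Theta n k" and fA: "finite A" and cA: "card A = k"
    and c: "card (dom \<theta> \<inter> A) \<noteq> k" "card (dom \<theta> \<inter> A) \<noteq> k - 1"
  shows "{\<eta>\<in>Theta n (k+1). \<theta> \<subseteq>\<^sub>m \<eta> \<and> A \<subseteq> dom \<eta>} = {}"
proof (rule ccontr)
  assume "{\<eta>\<in>Theta n (k+1). \<theta> \<subseteq>\<^sub>m \<eta> \<and> A \<subseteq> dom \<eta>} \<noteq> {}"
  then obtain \<eta> where e: "\<eta> \<in> Theta n (k+1)" "\<theta> \<subseteq>\<^sub>m \<eta>" "A \<subseteq> dom \<eta>" by auto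
  have fd: "finite (dom \<theta>)" using Theta_finite_dom[OF th] .
  have cd: "card (dom \<theta>) = k" using th by (simp add: Theta_def)
  have sub: "dom \<theta> \<union> A \<subseteq> dom \<eta>" using e(3) map_le_implies_dom_le[OF e(2)] by blast
  have "card (dom \<theta> \<union> A) \<le> k + 1"
    using card_mono[OF Theta_finite_dom[OF e(1)] sub] e(1) by (simp add: Theta_def)
  moreover have "card (dom \<theta> \<union> A) + card (dom \<theta> \<inter> A) = k + k" using card_Un_Int[OF fd fA] cd cA by simp
  moreover have "card (dom \<theta> \<inter> A) \<le> k" using card_mono[OF fA, of "dom \<theta> \<inter> A"] cA by auto
  ultimately show False using c by linarith
qed

lemma case2_sets:
  assumes th: "\<theta> \<in> Theta n k" and fA: "finite A" and cA: "card A = k" and k1: "1 \<le> k"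
    and c: "card (dom \<theta> \<inter> A) = k - 1"
  shows "A - dom \<theta> = {the_elem (A - dom \<theta>)}" "dom \<theta> - A = {the_elem (dom \<theta> - A)}"
proof -
  have fd: "finite (dom \<theta>)" using Theta_finite_dom[OF th] .
  have cd: "card (dom \<theta>) = k" using th by (simp add: Theta_def)
  have "card (A - dom \<theta>) = 1" using card_Diff_subset_Int[of A "dom \<theta>"] fA c cA k1
    by (simp add: Int_commute)
  then obtain i where "A - dom \<theta> = {i}" by (auto simp: card_1_singleton_iff)
  then show "A - dom \<theta> = {the_elem (A - dom \<theta>)}" by simp
  have "card (dom \<theta> - A) = 1" using card_Diff_subset_Int[of "dom \<theta>" A] fd c cd k1
    by simp
  then obtain i0 where "dom \<theta> - A = {i0}" by (auto simp: card_1_singleton_iff)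
  then show "dom \<theta> - A = {the_elem (dom \<theta> - A)}" by simp
qed

lemma tensor_case2:
  fixes Q :: "'y::finite \<Rightarrow> 'y \<Rightarrow> real"
  assumes sym: "\<forall>x y. Q x y = Q y x" and st: "stochastic Q" and irr: "irreducible_mat Q"
    and eig: "eigen_enum Q lam m" and f: "fundamental Q lam m A b G"
    and th: "\<theta> \<in> Theta n k" and fA: "finite A" and cA: "card A = k" and k1: "1 \<le> k"
    and c: "card (dom \<theta> \<inter> A) = k - 1"
  shows "(\<Sum>y\<in>UNIV. tensor A G ((\<theta>(the_elem (A - dom \<theta>)\<mapsto>y))|`A)) = Qk Q lam k A G \<theta>"
proof -
  define i where "i = the_elem (A - dom \<theta>)"
  define i0 where "i0 = the_elem (dom \<theta> - A)"
  have iA: "A - dom \<theta> = {i}" and i0A: "dom \<theta> - A = {i0}"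
    using case2_sets[OF th fA cA k1 c] by (simp_all add: i_def i0_def)
  have ii: "i \<in> A" "i \<notin> dom \<theta>" using iA by auto
  have sub: "A - {i} \<subseteq> dom \<theta>" using iA by auto
  define P where "P = (\<Prod>j\<in>A-{i}. G j (the (\<theta> j)))"
  have t1: "tensor A G ((\<theta>(i\<mapsto>y))|`A) = G i y * P" for y
  proof -
    have d: "dom ((\<theta>(i\<mapsto>y))|`A) = A" using sub ii by auto
    have "tensor A G ((\<theta>(i\<mapsto>y))|`A) = (\<Prod>j\<in>A. G j (the (((\<theta>(i\<mapsto>y))|`A) j)))"
      using d unfolding tensor_def by (simp only: if_True refl)
    also have "\<dots> = G i (the (((\<theta>(i\<mapsto>y))|`A) i)) * (\<Prod>j\<in>A-{i}. G j (the (((\<theta>(i\<mapsto>y))|`A) j)))"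
      by (rule prod.remove[OF fA ii(1)])
    also have "(\<Prod>j\<in>A-{i}. G j (the (((\<theta>(i\<mapsto>y))|`A) j))) = P"
      unfolding P_def by (rule prod.cong) auto
    also have "((\<theta>(i\<mapsto>y))|`A) i = Some y" using ii(1) by simp
    finally show ?thesis by (simp only: option.sel)
  qed
  define \<theta>bar where "\<theta>bar = (\<theta> |` (A - {i}))(i \<mapsto> the (\<theta> i0))"
  have t2: "tensor A G \<theta>bar = G i (the (\<theta> i0)) * P"
  proof -
    have d: "dom \<theta>bar = A" using sub ii unfolding \<theta>bar_def by auto
    have "(\<Prod>j\<in>A. G j (the (\<theta>bar j))) 
        = G i (the (\<theta>bar i)) * (\<Prod>j\<in>A-{i}. G j (the (\<theta>bar j)))"
      by (rule prod.remove[OF fA ii(1)])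
    also have "(\<Prod>j\<in>A-{i}. G j (the (\<theta>bar j))) = P"
      unfolding P_def \<theta>bar_def by (rule prod.cong) auto
    moreover have "\<theta>bar i = Some (the (\<theta> i0))" by (simp add: \<theta>bar_def)
    ultimately show ?thesis using d by (simp add: tensor_def)
  qed
  have q: "Qk Q lam k A G \<theta> = (if G i \<in> eigsp Q lam 0 then real (card (UNIV :: 'y set)) * tensor A G \<theta>bar else 0)"
    unfolding Qk_def Let_def using c i_def i0_def \<theta>bar_def by simp
  have "(\<Sum>y\<in>UNIV. tensor A G ((\<theta>(i\<mapsto>y))|`A)) = (\<Sum>y\<in>UNIV. G i y) * P"
    unfolding t1 by (simp only: sum_distrib_right)
  also have "\<dots> = (if G i \<in> eigsp Q lam 0 then real (card (UNIV::'y set)) * G i (the (\<theta> i0)) else 0) * P"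
    using fund_sum[OF sym st irr eig f ii(1)] by simp
  also have "\<dots> = Qk Q lam k A G \<theta>" using q t2 by simp
  finally show ?thesis unfolding i_def .
qed

theorem lemma7p5:
  fixes Q :: "'y::finite \<Rightarrow> 'y \<Rightarrow> real" and lam :: "nat \<Rightarrow> real"
    and m n k :: nat and a :: "nat \<Rightarrow> nat" and A :: "nat set"
    and T :: "'t set" and c :: "'t \<Rightarrow> real" and G :: "'t \<Rightarrow> nat \<Rightarrow> 'y \<Rightarrow> real"
    and F :: "(nat \<rightharpoonup> 'y) \<Rightarrow> real"
  assumes symQ: "\<forall>x y. Q x y = Q y x"
    and stochQ: "stochastic Q"
    and irrQ: "irreducible_mat Q"
    and eig: "eigen_enum Q lam m"
    and k1: "1 \<le> k" and kn: "k \<le> n - 1"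
    and asum: "(\<Sum>i\<le>m. a i) = k + 1" and a0: "1 \<le> a 0"
    and AX: "A \<subseteq> {1..n}" and cardA: "card A = k"
    and finT: "finite T"
    and fund: "\<forall>t\<in>T. fundamental Q lam m A (a(0 := a 0 - 1)) (G t)"
    and Fdef: "F = (\<lambda>\<theta>. \<Sum>t\<in>T. c t * tensor A (G t) \<theta>)"
  shows "\<forall>\<theta>\<in>Theta n k. D n (k + 1) (Dstar n (k + 1) F) \<theta>
           = real (card (UNIV :: 'y set)) * real (n - k) * F \<theta>
             + (\<Sum>t\<in>T. c t * Qk Q lam k A (G t) \<theta>)"
proof
  fix \<theta> :: "nat \<rightharpoonup> 'y" assume th: "\<theta> \<in> Theta n k"
  have fA: "finite A" using AX by (rule finite_subset) simp
  have fd: "finite (dom \<theta>)" using Theta_finite_dom[OF th] .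
  have cd: "card (dom \<theta>) = k" using th by (simp add: Theta_def)
  have supp: "\<forall>\<phi>. dom \<phi> \<noteq> A \<longrightarrow> F \<phi> = 0" by (simp add: Fdef tensor_def)
  let ?E = "{\<eta>\<in>Theta n (k+1). \<theta> \<subseteq>\<^sub>m \<eta> \<and> A \<subseteq> dom \<eta>}"
  have L: "D n (k + 1) (Dstar n (k + 1) F) \<theta> = (\<Sum>\<eta>\<in>?E. F (\<eta>|`A))"
    by (rule outer[OF AX cardA supp])
  have ck: "dom \<theta> = A" if "card (dom \<theta> \<inter> A) = k"
  proof -
    have "dom \<theta> \<inter> A = A" using card_subset_eq[OF fA _ ] that cardA by (metis Int_lower2)
    then have "A \<subseteq> dom \<theta>" by blast
    then show ?thesis using card_subset_eq[OF fd] cd cardA by metis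
  qed
  have Qk0: "Qk Q lam k A (G t) \<theta> = 0" if "card (dom \<theta> \<inter> A) \<noteq> k - 1" for t
    using that by (simp add: Qk_def)
  consider (c1) "dom \<theta> = A" | (c2) "dom \<theta> \<noteq> A" "card (dom \<theta> \<inter> A) = k - 1"
    | (c3) "dom \<theta> \<noteq> A" "card (dom \<theta> \<inter> A) \<noteq> k - 1" by blast
  then show "D n (k + 1) (Dstar n (k + 1) F) \<theta>
           = real (card (UNIV :: 'y set)) * real (n - k) * F \<theta>
             + (\<Sum>t\<in>T. c t * Qk Q lam k A (G t) \<theta>)"
  proof cases
    case c1
    have "card (dom \<theta> \<inter> A) \<noteq> k - 1" using c1 cardA k1 by simp
    then have q0: "(\<Sum>t\<in>T. c t * Qk Q lam k A (G t) \<theta>) = 0" using Qk0 by simp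
    note E = E_case1[OF th c1]
    have "(\<Sum>\<eta>\<in>?E. F (\<eta>|`A)) = (\<Sum>p\<in>({1..n}-A) \<times> UNIV. F (((\<lambda>(j,y). \<theta>(j\<mapsto>y)) p)|`A))"
      unfolding E(1) by (rule sum.reindex[OF E(2), unfolded comp_def])
    also have "\<dots> = (\<Sum>p\<in>({1..n}-A) \<times> (UNIV::'y set). F \<theta>)"
    proof (rule sum.cong[OF refl], clarify)
      fix j y assume j: "j \<in> {1..n}" "j \<notin> A"
      have "(\<theta>(j\<mapsto>y))|`A = \<theta>"
      proof
        fix x show "((\<theta>(j\<mapsto>y))|`A) x = \<theta> x"
          using j c1 by (cases "x \<in> A") auto
      qed
      then show "F ((\<theta>(j\<mapsto>y))|`A) = F \<theta>" by simp
    qed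
    also have "\<dots> = real (card (UNIV :: 'y set)) * real (n - k) * F \<theta>"
      using card_Diff_subset[OF fA AX] cardA by (simp add: card_cartesian_product)
    finally show ?thesis using L q0 by simp
  next
    case c2
    define i where "i = the_elem (A - dom \<theta>)"
    have iA: "A - dom \<theta> = {i}" using case2_sets[OF th fA cardA k1 c2(2)] by (simp add: i_def)
    note E = E_case2[OF th AX iA]
    have F0: "F \<theta> = 0" using supp c2 by simp
    have "(\<Sum>\<eta>\<in>?E. F (\<eta>|`A)) = (\<Sum>y\<in>UNIV. F ((\<theta>(i\<mapsto>y))|`A))"
      unfolding E(1) by (rule sum.reindex[OF E(2), unfolded comp_def])
    also have "\<dots> = (\<Sum>y\<in>UNIV. \<Sum>t\<in>T. c t * tensor A (G t) ((\<theta>(i\<mapsto>y))|`A))"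
      by (simp only: Fdef)
    also have "\<dots> = (\<Sum>t\<in>T. c t * (\<Sum>y\<in>UNIV. tensor A (G t) ((\<theta>(i\<mapsto>y))|`A)))"
      by (subst sum.swap) (simp only: sum_distrib_left)
    also have "\<dots> = (\<Sum>t\<in>T. c t * Qk Q lam k A (G t) \<theta>)"
    proof (rule sum.cong[OF refl])
      fix t assume "t \<in> T"
      then have f: "fundamental Q lam m A (a(0 := a 0 - 1)) (G t)" using fund by blast
      show "c t * (\<Sum>y\<in>UNIV. tensor A (G t) ((\<theta>(i\<mapsto>y))|`A)) = c t * Qk Q lam k A (G t) \<theta>"
        using tensor_case2[OF symQ stochQ irrQ eig f th fA cardA k1 c2(2)] unfolding i_def by simp
    qed
    finally show ?thesis using L F0 by simp
  next
    case c3
    have "card (dom \<theta> \<inter> A) \<noteq> k" using ck c3 by blast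
    then have E: "?E = {}" using E_case3[OF th fA cardA _ c3(2)] by blast
    have F0: "F \<theta> = 0" using supp c3 by simp
    have q0: "(\<Sum>t\<in>T. c t * Qk Q lam k A (G t) \<theta>) = 0" using Qk0 c3 by simp
    have "D n (k + 1) (Dstar n (k + 1) F) \<theta> = 0" unfolding L E by (rule sum.empty)
    then show ?thesis using F0 q0 by simp
  qed
qed

end
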